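(* Let $G$ be a group, $\Lambda$ an ordered abelian group, $\delta\in\Lambda$, $\delta\geqslant0$, and $l:G\to\Lambda$ a $\delta$-hyperbolic length function. For every $k\in\mathbb{N}$: if $l$ satisfies $(R1,k)$ then it satisfies $(R2,k+1)$; and if $l$ satisfies $(R2,k)$ then it satisfies $(R1,k)$.
   Context: $\Lambda_{\mathbb{Q}}$ is the ordered divisible hull of $\Lambda$, containing $\Lambda$. A length function on $G$ is $l:G\to\Lambda$ with $l(g)\geqslant0$, $l(1)=0$, $l(g)=l(g^{-1})$, $l(gh)\leqslant l(g)+l(h)$. Let $c(g,h)=\tfrac12(l(g)+l(h)-l(g^{-1}h))\in\Lambda_{\mathbb{Q}}$; $l$ is $\delta$-hyperbolic if $c(f,g)\geqslant\min\{c(f,h),c(g,h)\}-\delta$ for all $f,g,h$. For $\alpha\in\Lambda$ and $g,u,g_1\in G$, write $g=u\circ_\alpha g_1$ if $g=ug_1$ and $c(u^{-1},g_1)\leqslant\alpha$. $(R1,k)$: for all $g,h\in G$ there exist $u,g_1,h_1\in G$ with $g=u\circ_{k\delta}g_1$, $h=u\circ_{k\delta}h_1$ and $g^{-1}h=g_1^{-1}\circ_{k\delta}h_1$. $(R2,k)$: for all $g,h\in G$ there exists $u\in G$ with $l(u)\leqslant c(g,h)+k\delta$, $l(u^{-1}g)\leqslant c(g^{-1},g^{-1}h)+k\delta$ and $l(u^{-1}h)\leqslant c(h^{-1},h^{-1}g)+k\delta$. *)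

theory Defs
  imports Main
begin

(* The group G is written additively as a (not necessarily commutative) type of
   class group_add: g + h is the product gh, -g the inverse, 0 the identity. *)

fun nsmul :: "nat \<Rightarrow> 'b::monoid_add \<Rightarrow> 'b" where
  "nsmul 0 x = 0"
| "nsmul (Suc n) x = x + nsmul n x"

definition length_function :: "('a::group_add \<Rightarrow> 'b::linordered_ab_group_add) \<Rightarrow> bool" where
  "length_function l \<longleftrightarrow>
     (\<forall>g. 0 \<le> l g) \<and> l 0 = 0 \<and> (\<forall>g. l g = l (- g)) \<and>
     (\<forall>g h. l (g + h) \<le> l g + l h)"

(* gp2 l g h = 2 * c(g,h) = l(g) + l(h) - l(g^{-1} h), an element of Lambda.
   All statements about c (which lives in Lambda_Q) are expressed by doubling,
   which is an order embedding Lambda_Q -> Lambda_Q. *)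
definition gp2 :: "('a::group_add \<Rightarrow> 'b::linordered_ab_group_add) \<Rightarrow> 'a \<Rightarrow> 'a \<Rightarrow> 'b" where
  "gp2 l g h = l g + l h - l (- g + h)"

definition hyperbolic :: "('a::group_add \<Rightarrow> 'b::linordered_ab_group_add) \<Rightarrow> 'b \<Rightarrow> bool" where
  "hyperbolic l \<delta> \<longleftrightarrow>
     (\<forall>f g h. gp2 l f g \<ge> min (gp2 l f h) (gp2 l g h) - (\<delta> + \<delta>))"

(* g = u o_alpha g1 :  g = u g1  and  c(u^{-1}, g1) <= alpha *)
definition red_prod :: "('a::group_add \<Rightarrow> 'b::linordered_ab_group_add) \<Rightarrow> 'a \<Rightarrow> 'a \<Rightarrow> 'b \<Rightarrow> 'a \<Rightarrow> bool" where
  "red_prod l g u \<alpha> g1 \<longleftrightarrow> g = u + g1 \<and> gp2 l (- u) g1 \<le> \<alpha> + \<alpha>"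

definition R1 :: "('a::group_add \<Rightarrow> 'b::linordered_ab_group_add) \<Rightarrow> 'b \<Rightarrow> nat \<Rightarrow> bool" where
  "R1 l \<delta> k \<longleftrightarrow> (\<forall>g h. \<exists>u g1 h1.
      red_prod l g u (nsmul k \<delta>) g1 \<and>
      red_prod l h u (nsmul k \<delta>) h1 \<and>
      red_prod l (- g + h) (- g1) (nsmul k \<delta>) h1)"

definition R2 :: "('a::group_add \<Rightarrow> 'b::linordered_ab_group_add) \<Rightarrow> 'b \<Rightarrow> nat \<Rightarrow> bool" where
  "R2 l \<delta> k \<longleftrightarrow> (\<forall>g h. \<exists>u.
      l u + l u \<le> gp2 l g h + (nsmul k \<delta> + nsmul k \<delta>) \<and>
      l (- u + g) + l (- u + g) \<le> gp2 l (- g) (- g + h) + (nsmul k \<delta> + nsmul k \<delta>) \<and>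
      l (- u + h) + l (- u + h) \<le> gp2 l (- h) (- h + g) + (nsmul k \<delta> + nsmul k \<delta>))"

end

theory Submission
  imports Defs
begin

lemma half_le: fixes x y :: "'b::linordered_ab_group_add"
  assumes "x + x \<le> y + y" shows "x \<le> y"
proof (rule ccontr)
  assume "\<not> x \<le> y" then have "y < x" by (meson not_le)
  then have "y + y < x + x" using add_strict_mono by blast
  with assms show False by simp
qed

lemma part2:
  fixes l :: "'a::group_add \<Rightarrow> 'b::linordered_ab_group_add"
  assumes lf: "length_function l" and r: "R2 l \<delta> k"
  shows "R1 l \<delta> k"
  unfolding R1_def
proof (intro allI)
  fix g h :: 'a
  define K where "K = nsmul k \<delta>"
  from r obtain u where
    u1: "l u + l u \<le> gp2 l g h + (K + K)" and
    u2: "l (- u + g) + l (- u + g) \<le> gp2 l (- g) (- g + h) + (K + K)" and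
    u3: "l (- u + h) + l (- u + h) \<le> gp2 l (- h) (- h + g) + (K + K)"
    unfolding R2_def K_def by blast
  define g1 where "g1 = - u + g"
  define h1 where "h1 = - u + h"
  have neg: "\<And>x. l (- x) = l x" using lf unfolding length_function_def by metis
  have e1: "- g + (g + h) = h" by (simp add: add.assoc[symmetric])
  have e2: "- h + (h + g) = g" by (simp add: add.assoc[symmetric])
  have gg: "- (- g) + (- g + h) = h" by (simp add: add.assoc[symmetric])
  have hh: "- (- h) + (- h + g) = g" by (simp add: add.assoc[symmetric])
  have hg: "l (- h + g) = l (- g + h)" using neg[of "- h + g"] by (simp add: minus_add)
  have A: "l g1 + l g1 \<le> l g + l (- g + h) - l h + (K + K)"
    using u2 unfolding g1_def gp2_def gg neg by simp
  have B: "l h1 + l h1 \<le> l h + l (- g + h) - l g + (K + K)"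
    using u3 unfolding h1_def gp2_def hh neg hg by simp
  have U: "l u + l u \<le> l g + l h - l (- g + h) + (K + K)"
    using u1 unfolding gp2_def by simp
  have s1: "g = u + g1" unfolding g1_def by (simp add: add.assoc[symmetric])
  have s2: "h = u + h1" unfolding h1_def by (simp add: add.assoc[symmetric])
  have s3: "- g + h = - g1 + h1" unfolding g1_def h1_def
    by (simp add: minus_add add.assoc)
  have c1: "gp2 l (- u) g1 \<le> K + K"
  proof -
    have "gp2 l (- u) g1 = l u + l g1 - l g" unfolding gp2_def neg using s1 by simp
    moreover have "(l u + l g1 - l g) + (l u + l g1 - l g) \<le> (K + K) + (K + K)"
      using add_mono[OF U A] by (simp add: algebra_simps)
    ultimately show ?thesis using half_le by metis
  qed
  have c2: "gp2 l (- u) h1 \<le> K + K"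
  proof -
    have "gp2 l (- u) h1 = l u + l h1 - l h" unfolding gp2_def neg using s2 by simp
    moreover have "(l u + l h1 - l h) + (l u + l h1 - l h) \<le> (K + K) + (K + K)"
      using add_mono[OF U B] by (simp add: algebra_simps)
    ultimately show ?thesis using half_le by metis
  qed
  have c3: "gp2 l (- (- g1)) h1 \<le> K + K"
  proof -
    have "gp2 l (- (- g1)) h1 = l g1 + l h1 - l (- g + h)" unfolding gp2_def s3 by simp
    moreover have "(l g1 + l h1 - l (- g + h)) + (l g1 + l h1 - l (- g + h)) \<le> (K + K) + (K + K)"
      using add_mono[OF A B] by (simp add: algebra_simps)
    ultimately show ?thesis using half_le by metis
  qed
  show "\<exists>u g1 h1. red_prod l g u (nsmul k \<delta>) g1 \<and> red_prod l h u (nsmul k \<delta>) h1 \<and>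
          red_prod l (- g + h) (- g1) (nsmul k \<delta>) h1"
    unfolding red_prod_def K_def[symmetric]
    using s1 s2 s3 c1 c2 c3 by blast
qed


lemma fin: fixes m X Y Z K d :: "'b::linordered_ab_group_add"
  assumes "m - (K + K) \<le> X" "m - (K + K) \<le> Y" "Z \<ge> min X Y - (d + d)"
  shows "m \<le> Z + ((d + K) + (d + K))"
proof -
  have "m - (K + K) \<le> min X Y" using assms by simp
  then have "m - (K + K) - (d + d) \<le> Z" using assms(3) by (meson diff_right_mono order_trans)
  then show ?thesis by (simp add: algebra_simps)
qed

lemma part1:
  fixes l :: "'a::group_add \<Rightarrow> 'b::linordered_ab_group_add"
  assumes lf: "length_function l" and hyp: "hyperbolic l \<delta>" and r: "R1 l \<delta> k"
  shows "R2 l \<delta> (k + 1)"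
  unfolding R2_def
proof (intro allI)
  fix g h :: 'a
  define K where "K = nsmul k \<delta>"
  have K': "nsmul (k + 1) \<delta> = \<delta> + K" unfolding K_def by simp
  from r obtain u g1 h1 where
    s1: "g = u + g1" and a0: "gp2 l (- u) g1 \<le> K + K" and
    s2: "h = u + h1" and b0: "gp2 l (- u) h1 \<le> K + K" and
    s3: "- g + h = - g1 + h1" and c0: "gp2 l (- (- g1)) h1 \<le> K + K"
    unfolding R1_def red_prod_def K_def by blast
  have neg: "\<And>x. l (- x) = l x" using lf unfolding length_function_def by metis
  have H: "\<And>f g h. gp2 l f g \<ge> min (gp2 l f h) (gp2 l g h) - (\<delta> + \<delta>)"
    using hyp unfolding hyperbolic_def by blast
  have a: "l u + l g1 - l g \<le> K + K" using a0 unfolding gp2_def neg s1 by simp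
  have b: "l u + l h1 - l h \<le> K + K" using b0 unfolding gp2_def neg s2 by simp
  have c: "l g1 + l h1 - l (- g + h) \<le> K + K" using c0 unfolding gp2_def s3 by simp
  have e1: "- g + u = - g1" unfolding s1 by (simp add: minus_add add.assoc)
  have e2: "- h + u = - h1" unfolding s2 by (simp add: minus_add add.assoc)
  have e3: "- (- g) + - g1 = u" unfolding s1 by (simp add: add.assoc)
  have e4: "- (- h) + - h1 = u" unfolding s2 by (simp add: add.assoc)
  have e5: "- (- g + h) + - g1 = - h1" unfolding s3 by (simp add: minus_add add.assoc)
  have e6': "- (- h + g) = - g + h" by (simp add: minus_add)
  have e6: "- (- h + g) + - h1 = - g1" unfolding e6' s3 by (simp add: add.assoc)
  have hg: "l (- h + g) = l (- g + h)" using neg[of "- h + g"] by (simp add: minus_add)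
  have f1: "- u + g = g1" unfolding s1 by (simp add: add.assoc[symmetric])
  have f2: "- u + h = h1" unfolding s2 by (simp add: add.assoc[symmetric])
  have G1: "l u + l u - (K + K) \<le> gp2 l g u"
    using a unfolding gp2_def e1 neg by (simp add: algebra_simps)
  have G2: "l u + l u - (K + K) \<le> gp2 l h u"
    using b unfolding gp2_def e2 neg by (simp add: algebra_simps)
  have P1: "l u + l u \<le> gp2 l g h + (nsmul (k+1) \<delta> + nsmul (k+1) \<delta>)"
    unfolding K' by (rule fin[OF G1 G2 H])
  have G3: "l g1 + l g1 - (K + K) \<le> gp2 l (- g) (- g1)"
    using a unfolding gp2_def e3 neg by (simp add: algebra_simps)
  have G4: "l g1 + l g1 - (K + K) \<le> gp2 l (- g + h) (- g1)"
    using c unfolding gp2_def e5 neg by (simp add: algebra_simps)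
  have P2: "l (- u + g) + l (- u + g) \<le> gp2 l (- g) (- g + h) + (nsmul (k+1) \<delta> + nsmul (k+1) \<delta>)"
    unfolding K' f1 by (rule fin[OF G3 G4 H])
  have G5: "l h1 + l h1 - (K + K) \<le> gp2 l (- h) (- h1)"
    using b unfolding gp2_def e4 neg by (simp add: algebra_simps)
  have G6: "l h1 + l h1 - (K + K) \<le> gp2 l (- h + g) (- h1)"
    using c unfolding gp2_def e6 neg hg by (simp add: algebra_simps)
  have P3: "l (- u + h) + l (- u + h) \<le> gp2 l (- h) (- h + g) + (nsmul (k+1) \<delta> + nsmul (k+1) \<delta>)"
    unfolding K' f2 by (rule fin[OF G5 G6 H])
  show "\<exists>u. l u + l u \<le> gp2 l g h + (nsmul (k + 1) \<delta> + nsmul (k + 1) \<delta>) \<and>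
      l (- u + g) + l (- u + g) \<le> gp2 l (- g) (- g + h) + (nsmul (k + 1) \<delta> + nsmul (k + 1) \<delta>) \<and>
      l (- u + h) + l (- u + h) \<le> gp2 l (- h) (- h + g) + (nsmul (k + 1) \<delta> + nsmul (k + 1) \<delta>)"
    using P1 P2 P3 by blast
qed

theorem mainTheorem13:
  fixes l :: "'a::group_add \<Rightarrow> 'b::linordered_ab_group_add" and \<delta> :: 'b and k :: nat
  assumes "0 \<le> \<delta>" and "length_function l" and "hyperbolic l \<delta>"
  shows "(R1 l \<delta> k \<longrightarrow> R2 l \<delta> (k + 1)) \<and> (R2 l \<delta> k \<longrightarrow> R1 l \<delta> k)"
  using part1[OF assms(2,3)] part2[OF assms(2)] by blast

end
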